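(* Let $\Sigma=\begin{pmatrix}\Sigma_{11}&\Sigma_{12}\\ \Sigma_{12}&\Sigma_{22}\end{pmatrix}$ be a real symmetric positive semidefinite $2\times 2$ matrix with $\Sigma_{11}>0$ and $\Sigma_{22}>0$, and let $b_1,b_2$ be real numbers. Define \[\rho=\frac{\Sigma_{12}}{\sqrt{\Sigma_{11}\Sigma_{22}}},\qquad \rho^*=\sqrt{\frac{\Sigma_{22}}{\Sigma_{11}}}.\] Let $(Z_1,Z_2)$ be a bivariate normal random vector with $\mathbb{E}Z_1=\mathbb{E}Z_2=0$, $\operatorname{Var}(Z_1)=\operatorname{Var}(Z_2)=1$ and $\operatorname{Cov}(Z_1,Z_2)=\rho$, and let $(Z_1^*,Z_2^* )$ be a bivariate normal random vector with $\mathbb{E}Z^*_1=\mathbb{E}Z^*_2=0$, $\operatorname{Var}(Z^*_1)=\operatorname{Var}(Z^*_2)=1$ and $\operatorname{Cov}(Z^*_1,Z^*_2)=\rho^*$. Let \[\alpha=\mathbb{P}(Z_1^*>b_1 \,\cup\, Z_2^*>b_2).\] Suppose that (1) $b_1\ge b_2\ge 0$, and (2) $\Sigma_{12}\ge \Sigma_{22}$. Then \[\mathbb{P}(Z_1>b_1\,\cup\, Z_2>b_2)\le \alpha .\]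
   Context: Interpretation (not needed for the statement): $\Sigma$ is the covariance matrix of two successive asymptotically normal, mean-zero treatment-effect estimates $(\hat\eta_1,\hat\eta_2)$ under the null hypothesis, $Z_k=\hat\eta_k/\sqrt{\Sigma_{kk}}$ are the standardised statistics, and $(Z_1^*,Z_2^* )$ are the standardised statistics of a sequence with the same variances but with the "canonical" covariance $\operatorname{Cov}=\Sigma_{22}$; $b_1,b_2$ are upper (efficacy) boundary values of a two-analysis group sequential test, computed so that the canonical sequence has type 1 error $\alpha$. Under hypotheses (2) and positive semidefiniteness one has $\Sigma_{22}\le\Sigma_{11}$, so $\rho^*\in(0,1]$ and the distribution of $(Z_1^*,Z_2^* )$ is well defined. *)

theory Defs
  imports "HOL-Probability.Probability"
begin

text \<open>Standard bivariate normal law (means 0, variances 1, correlation r, with |r| \<le> 1):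
  the law of (X, r X + sqrt(1 - r^2) Y) for X, Y independent standard normal.
  This determines the unique centred Gaussian law on R^2 with covariance matrix
  [[1, r], [r, 1]] (including the degenerate cases r = 1 or r = -1).\<close>
definition std_bivariate_normal :: "real \<Rightarrow> (real \<times> real) measure" where
  "std_bivariate_normal r =
     distr (density lborel std_normal_density \<Otimes>\<^sub>M density lborel std_normal_density) borel
       (\<lambda>(x, y). (x, r * x + sqrt (1 - r\<^sup>2) * y))"

definition is_std_bivariate_normal ::
    "'a measure \<Rightarrow> ('a \<Rightarrow> real) \<Rightarrow> ('a \<Rightarrow> real) \<Rightarrow> real \<Rightarrow> bool" where
  "is_std_bivariate_normal M Z1 Z2 r \<longleftrightarrow>
     prob_space M \<and> Z1 \<in> borel_measurable M \<and> Z2 \<in> borel_measurable M \<and>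
     distr M borel (\<lambda>\<omega>. (Z1 \<omega>, Z2 \<omega>)) = std_bivariate_normal r"

end

theory Submission
  imports Defs
begin
abbreviation "Q \<equiv> (lborel \<Otimes>\<^sub>M lborel :: (real \<times> real) measure)"

lemma LLpsf: "pair_sigma_finite lborel lborel"
  by unfold_locales

lemma shear_y: "distr Q Q (\<lambda>(x,y). (x, y + a*x)) = Q"
proof (rule measure_eqI)
  show "sets (distr Q Q (\<lambda>(x,y). (x, y + a*x))) = sets Q" by simp
next
  fix A assume A: "A \<in> sets (distr Q Q (\<lambda>(x,y). (x, y + a*x)))"
  hence A': "A \<in> sets Q" by simp
  have m: "(\<lambda>(x,y). (x, y + a*x)) \<in> measurable Q Q" by measurable
  have "emeasure (distr Q Q (\<lambda>(x,y). (x, y + a*x))) A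
     = emeasure Q ((\<lambda>(x,y). (x, y + a*x)) -` A \<inter> space Q)"
    by (rule emeasure_distr[OF m A'])
  also have "\<dots> = (\<integral>\<^sup>+x. emeasure lborel (Pair x -` ((\<lambda>(x,y). (x, y + a*x)) -` A \<inter> space Q)) \<partial>lborel)"
    by (rule lborel.emeasure_pair_measure_alt) (use m A' in measurable)
  also have "\<dots> = (\<integral>\<^sup>+x. emeasure lborel (Pair x -` A) \<partial>lborel)"
  proof (rule nn_integral_cong)
    fix x :: real
    have PA: "Pair x -` A \<in> sets borel" using A' by (metis sets_Pair1 sets_lborel)
    have "Pair x -` ((\<lambda>(x,y). (x, y + a*x)) -` A \<inter> space Q) = (\<lambda>y. a*x + y) -` (Pair x -` A) \<inter> space lborel"
      by (auto simp: space_pair_measure add.commute)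
    hence "emeasure lborel (Pair x -` ((\<lambda>(x,y). (x, y + a*x)) -` A \<inter> space Q)) = emeasure (distr lborel borel ((+) (a*x))) (Pair x -` A)"
      using PA by (simp add: emeasure_distr)
    also have "\<dots> = emeasure lborel (Pair x -` A)" by (simp add: lborel_distr_plus)
    finally show "emeasure lborel (Pair x -` ((\<lambda>(x,y). (x, y + a*x)) -` A \<inter> space Q)) = emeasure lborel (Pair x -` A)" .
  qed
  also have "\<dots> = emeasure Q A" by (rule lborel.emeasure_pair_measure_alt[symmetric, OF A'])
  finally show "emeasure (distr Q Q (\<lambda>(x,y). (x, y + a*x))) A = emeasure Q A" .
qed

lemma shear_x: "distr Q Q (\<lambda>(x,y). (x + a*y, y)) = Q"
proof (rule measure_eqI)
  show "sets (distr Q Q (\<lambda>(x,y). (x + a*y, y))) = sets Q" by simp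
next
  fix A assume A: "A \<in> sets (distr Q Q (\<lambda>(x,y). (x + a*y, y)))"
  hence A': "A \<in> sets Q" by simp
  have m: "(\<lambda>(x,y). (x + a*y, y)) \<in> measurable Q Q" by measurable
  have "emeasure (distr Q Q (\<lambda>(x,y). (x + a*y, y))) A
     = emeasure Q ((\<lambda>(x,y). (x + a*y, y)) -` A \<inter> space Q)"
    by (rule emeasure_distr[OF m A'])
  also have "\<dots> = (\<integral>\<^sup>+y. emeasure lborel ((\<lambda>x. (x, y)) -` ((\<lambda>(x,y). (x + a*y, y)) -` A \<inter> space Q)) \<partial>lborel)"
    by (rule pair_sigma_finite.emeasure_pair_measure_alt2[OF LLpsf]) (use m A' in measurable)
  also have "\<dots> = (\<integral>\<^sup>+y. emeasure lborel ((\<lambda>x. (x, y)) -` A) \<partial>lborel)"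
  proof (rule nn_integral_cong)
    fix y :: real
    have PA: "(\<lambda>x. (x, y)) -` A \<in> sets borel" using A' by (metis sets_Pair2 sets_lborel)
    have "(\<lambda>x. (x, y)) -` ((\<lambda>(x,y). (x + a*y, y)) -` A \<inter> space Q) = (\<lambda>x. a*y + x) -` ((\<lambda>x. (x, y)) -` A) \<inter> space lborel"
      by (auto simp: space_pair_measure add.commute)
    hence "emeasure lborel ((\<lambda>x. (x, y)) -` ((\<lambda>(x,y). (x + a*y, y)) -` A \<inter> space Q)) = emeasure (distr lborel borel ((+) (a*y))) ((\<lambda>x. (x, y)) -` A)"
      using PA by (simp add: emeasure_distr)
    also have "\<dots> = emeasure lborel ((\<lambda>x. (x, y)) -` A)" by (simp add: lborel_distr_plus)
    finally show "emeasure lborel ((\<lambda>x. (x, y)) -` ((\<lambda>(x,y). (x + a*y, y)) -` A \<inter> space Q)) = emeasure lborel ((\<lambda>x. (x, y)) -` A)" .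
  qed
  also have "\<dots> = emeasure Q A" by (rule pair_sigma_finite.emeasure_pair_measure_alt2[OF LLpsf A', symmetric])
  finally show "emeasure (distr Q Q (\<lambda>(x,y). (x + a*y, y))) A = emeasure Q A" .
qed

lemma flip_y: "distr Q Q (\<lambda>(x,y). (x, - y)) = Q"
proof (rule measure_eqI)
  show "sets (distr Q Q (\<lambda>(x,y). (x, - y))) = sets Q" by simp
next
  fix A assume A: "A \<in> sets (distr Q Q (\<lambda>(x,y). (x, - y)))"
  hence A': "A \<in> sets Q" by simp
  have m: "(\<lambda>(x,y). (x, - y)) \<in> measurable Q Q" by measurable
  have "emeasure (distr Q Q (\<lambda>(x,y). (x, - y))) A
     = emeasure Q ((\<lambda>(x,y). (x, - y)) -` A \<inter> space Q)"
    by (rule emeasure_distr[OF m A'])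
  also have "\<dots> = (\<integral>\<^sup>+x. emeasure lborel (Pair x -` ((\<lambda>(x,y). (x, - y)) -` A \<inter> space Q)) \<partial>lborel)"
    by (rule lborel.emeasure_pair_measure_alt) (use m A' in measurable)
  also have "\<dots> = (\<integral>\<^sup>+x. emeasure lborel (Pair x -` A) \<partial>lborel)"
  proof (rule nn_integral_cong)
    fix x :: real
    have PA: "Pair x -` A \<in> sets borel" using A' by (metis sets_Pair1 sets_lborel)
    have "Pair x -` ((\<lambda>(x,y). (x, - y)) -` A \<inter> space Q) = uminus -` (Pair x -` A) \<inter> space lborel"
      by (auto simp: space_pair_measure)
    hence "emeasure lborel (Pair x -` ((\<lambda>(x,y). (x, - y)) -` A \<inter> space Q)) = emeasure (distr lborel borel uminus) (Pair x -` A)"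
      using PA by (simp add: emeasure_distr)
    also have "\<dots> = emeasure lborel (Pair x -` A)" by (simp add: lborel_distr_uminus)
    finally show "emeasure lborel (Pair x -` ((\<lambda>(x,y). (x, - y)) -` A \<inter> space Q)) = emeasure lborel (Pair x -` A)" .
  qed
  also have "\<dots> = emeasure Q A" by (rule lborel.emeasure_pair_measure_alt[symmetric, OF A'])
  finally show "emeasure (distr Q Q (\<lambda>(x,y). (x, - y))) A = emeasure Q A" .
qed

lemma refl_inv:
  fixes a b :: real
  assumes ab: "a\<^sup>2 + b\<^sup>2 = 1" and a1: "a \<noteq> -1"
  shows "distr Q Q (\<lambda>(x,y). (a*x + b*y, b*x - a*y)) = Q"
proof -
  define t where "t = b / (1 + a)"
  have a1': "1 + a \<noteq> 0" using a1 by linarith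
  have bb: "b*b = (1-a)*(1+a)" using ab by (simp add: power2_eq_square algebra_simps)
  have tb: "t * b = 1 - a"
  proof -
    have "t * b = (b*b) / (1+a)" unfolding t_def by simp
    also have "\<dots> = 1 - a" using a1' by (simp add: bb)
    finally show ?thesis .
  qed
  define F where "F = (\<lambda>(x::real,y::real). (x, - y))"
  define S1 where "S1 = (\<lambda>(x::real,y::real). (x + (-t)*y, y))"
  define S2 where "S2 = (\<lambda>(x::real,y::real). (x, y + b*x))"
  have [measurable]: "F \<in> measurable Q Q" "S1 \<in> measurable Q Q" "S2 \<in> measurable Q Q"
    unfolding F_def S1_def S2_def by simp_all
  have eq: "(\<lambda>(x,y). (a*x + b*y, b*x - a*y)) = S1 \<circ> (S2 \<circ> (S1 \<circ> F))"
  proof (rule ext)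
    fix p :: "real \<times> real"
    obtain x y where p: "p = (x,y)" by (cases p)
    have t1: "t*(1+a) = b" unfolding t_def using a1' by simp
    have e1: "a*x + b*y = x + t*y - t*(-y + b*x + b*t*y)"
    proof -
      have "t*(-y + b*x + b*t*y) = -t*y + (t*b)*x + (t*b)*t*y" by (simp add: algebra_simps)
      also have "\<dots> = -t*y + (1-a)*x + (1-a)*t*y" by (simp add: tb)
      finally have "x + t*y - t*(-y + b*x + b*t*y) = a*x + t*(1+a)*y" by (simp add: algebra_simps)
      thus ?thesis by (simp add: t1)
    qed
    have e2: "b*x - a*y = -y + b*x + b*t*y"
    proof -
      have "b*t*y = (1-a)*y" using tb by (simp add: mult.commute)
      thus ?thesis by (simp add: algebra_simps)
    qed
    show "(\<lambda>(x,y). (a*x + b*y, b*x - a*y)) p = (S1 \<circ> (S2 \<circ> (S1 \<circ> F))) p"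
    proof -
      have e1': "a*x + b*y = x + -t * -y + (-t)*(-y + b*(x + -t * -y))" using e1 by (simp add: algebra_simps)
      have e2': "b*x - a*y = -y + b*(x + -t * -y)" using e2 by (simp add: algebra_simps)
      show ?thesis unfolding F_def S1_def S2_def comp_def using e1' e2' by (simp only: p case_prod_conv)
    qed
  qed
  have "distr Q Q (S1 \<circ> (S2 \<circ> (S1 \<circ> F))) = distr (distr (distr (distr Q Q F) Q S1) Q S2) Q S1"
    by (simp add: distr_distr)
  also have "\<dots> = Q" unfolding F_def S1_def S2_def
    by (simp only: flip_y shear_x shear_y)
  finally show ?thesis unfolding eq .
qed

abbreviation "P \<equiv> (density lborel std_normal_density \<Otimes>\<^sub>M density lborel std_normal_density :: (real \<times> real) measure)"

lemma P_prob: "prob_space P"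
  by (intro prob_space_pair prob_space_normal_density) simp_all

lemma P_dens: "P = density Q (\<lambda>(x,y). ennreal (std_normal_density x) * ennreal (std_normal_density y))"
proof -
  interpret pr: prob_space "density lborel std_normal_density" by (rule prob_space_normal_density) simp
  show ?thesis
    by (rule pair_measure_density) (auto intro: pr.sigma_finite_measure_axioms lborel.sigma_finite_measure_axioms)
qed

lemma phi2: "std_normal_density x * std_normal_density y = exp (- (x\<^sup>2 + y\<^sup>2) / 2) / (2 * pi)"
proof -
  have "std_normal_density x * std_normal_density y = (1 / sqrt (2 * pi))^2 * (exp (- x\<^sup>2 / 2) * exp (- y\<^sup>2 / 2))"
    by (simp add: std_normal_density_def power2_eq_square)
  also have "\<dots> = exp (- (x\<^sup>2 + y\<^sup>2) / 2) / (2 * pi)"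
    by (simp add: power_divide exp_add[symmetric] add_divide_distrib diff_divide_distrib)
  finally show ?thesis .
qed

lemma P_inv:
  fixes a b :: real
  assumes ab: "a\<^sup>2 + b\<^sup>2 = 1" and a1: "a \<noteq> -1"
  shows "distr P P (\<lambda>(x,y). (a*x + b*y, b*x - a*y)) = P"
proof -
  define g where "g = (\<lambda>(x::real,y::real). ennreal (std_normal_density x) * ennreal (std_normal_density y))"
  define R where "R = (\<lambda>(x::real,y::real). (a*x + b*y, b*x - a*y))"
  have Rm[measurable]: "R \<in> measurable Q Q" unfolding R_def by simp
  have gm[measurable]: "g \<in> borel_measurable Q" unfolding g_def by simp
  have gR: "g (R p) = g p" for p
  proof -
    obtain x y where p: "p = (x,y)" by (cases p)
    have sq: "(a*x + b*y)\<^sup>2 + (b*x - a*y)\<^sup>2 = x\<^sup>2 + y\<^sup>2"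
    proof -
      have "(a*x + b*y)\<^sup>2 + (b*x - a*y)\<^sup>2 = (a\<^sup>2 + b\<^sup>2) * (x\<^sup>2 + y\<^sup>2)"
        by (simp add: power2_eq_square algebra_simps)
      thus ?thesis using ab by simp
    qed
    show ?thesis unfolding p g_def R_def
      apply (simp add: ennreal_mult'[symmetric] phi2)
      using sq by linarith
  qed
  have "distr P P R = distr (density Q g) Q R"
    unfolding P_dens g_def by (simp cong: distr_cong)
  also have "\<dots> = distr (density Q (\<lambda>p. g (R p))) Q R" by (simp add: gR)
  also have "\<dots> = density (distr Q Q R) g" by (rule density_distr[symmetric]) simp_all
  also have "\<dots> = density Q g" unfolding R_def using refl_inv[OF ab a1] by simp
  also have "\<dots> = P" unfolding P_dens g_def ..
  finally show ?thesis unfolding R_def .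
qed

lemma core:
  fixes r q b1 b2 :: real
  assumes q0: "0 < q" and qr: "q \<le> r" and r1: "r \<le> 1"
  shows "measure P {p. b1 < fst p \<or> b2 < r * fst p + sqrt (1 - r\<^sup>2) * snd p}
       \<le> measure P {p. b1 < fst p \<or> b2 < q * fst p + sqrt (1 - q\<^sup>2) * snd p}"
proof (cases "r = q")
  case True thus ?thesis by simp
next
  case False
  hence qr': "q < r" using qr by simp
  interpret PP: prob_space P by (rule P_prob)
  define s where "s = sqrt (1 - r\<^sup>2)"
  define w where "w = sqrt (1 - q\<^sup>2)"
  have r0: "0 < r" using q0 qr by simp
  have q1: "q \<le> 1" using qr r1 by simp
  have r2: "r\<^sup>2 \<le> 1" "q\<^sup>2 \<le> 1"
    using power_le_one[of r 2] power_le_one[of q 2] r0 r1 q0 q1 by simp_all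
  have rs: "r^2 + s^2 = 1" unfolding s_def using r2 by simp
  have qw: "q^2 + w^2 = 1" unfolding w_def using r2 by simp
  have s0: "s \<ge> 0" "w \<ge> 0" unfolding s_def w_def using r2 by simp_all
  define a where "a = r*q - s*w"
  define b where "b = s*q + r*w"
  define Dh where "Dh = 1 - r*q - s*w"
  have ab: "a\<^sup>2 + b\<^sup>2 = 1" unfolding a_def b_def using rs qw by algebra
  have a1: "a \<noteq> -1"
  proof
    assume am: "a = -1"
    hence "b\<^sup>2 = 0" using ab by simp
    hence "s*q + r*w = 0" unfolding b_def by simp
    moreover have "s*q \<ge> 0" "r*w \<ge> 0" using s0 q0 r0 by simp_all
    ultimately have "s*q = 0" by linarith
    hence "s = 0" using q0 by simp
    hence "a = r*q" unfolding a_def by simp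
    thus False using am r0 q0 by (smt (verit) mult_pos_pos)
  qed
  have I1: "(a - 1) * Dh = - ((r-q)^2)" unfolding a_def Dh_def using rs qw by algebra
  have I2: "b * Dh = (r-q)*(w-s)" unfolding b_def Dh_def using rs qw by algebra
  have I3: "2*Dh = (r-q)^2 + (s-w)^2" unfolding Dh_def using rs qw by algebra
  have Dh0: "Dh > 0" using I3 qr' by (smt (verit) power2_less_0 zero_less_power2)
  have J1: "r*(a*x + b*y) + s*(b*x - a*y) = q*x + w*y" for x y
    unfolding a_def b_def using rs qw by algebra
  have J2: "q*(a*x + b*y) + w*(b*x - a*y) = r*x + s*y" for x y
    unfolding a_def b_def using rs qw by algebra
  define R where "R = (\<lambda>(x::real,y::real). (a*x + b*y, b*x - a*y))"
  have Rm: "R \<in> measurable P P" unfolding R_def by simp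
  have RP: "distr P P R = P" unfolding R_def by (rule P_inv[OF ab a1])
  have spP: "space P = UNIV" by (simp add: space_pair_measure)
  define A0 where "A0 = {p \<in> space P. b1 < fst p}"
  define A1 where "A1 = {p \<in> space P. \<not> b1 < fst p \<and> b2 < r * fst p + s * snd p \<and> b2 < q * fst p + w * snd p}"
  define A2 where "A2 = {p \<in> space P. \<not> b1 < fst p \<and> b2 < r * fst p + s * snd p \<and> \<not> b2 < q * fst p + w * snd p}"
  define A3 where "A3 = {p \<in> space P. \<not> b1 < fst p \<and> b2 < q * fst p + w * snd p \<and> \<not> b2 < r * fst p + s * snd p}"
  have m: "A0 \<in> sets P" "A1 \<in> sets P" "A2 \<in> sets P" "A3 \<in> sets P"
    unfolding A0_def A1_def A2_def A3_def by measurable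
  have e1: "{p. b1 < fst p \<or> b2 < r * fst p + sqrt (1 - r\<^sup>2) * snd p} = A0 \<union> (A1 \<union> A2)"
    unfolding A0_def A1_def A2_def s_def using r2 spP by auto
  have e2: "{p. b1 < fst p \<or> b2 < q * fst p + sqrt (1 - q\<^sup>2) * snd p} = A0 \<union> (A1 \<union> A3)"
    unfolding A0_def A1_def A3_def w_def using r2 spP by auto
  have mA2: "measure P A2 = measure P (R -` A2 \<inter> space P)"
    using measure_distr[OF Rm m(3)] RP by simp
  have sub: "R -` A2 \<inter> space P \<subseteq> A3"
  proof
    fix p assume "p \<in> R -` A2 \<inter> space P"
    then obtain x y where p: "p = (x,y)" and
      c1: "\<not> b1 < a*x + b*y" and c2: "b2 < r*(a*x + b*y) + s*(b*x - a*y)"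
      and c3: "\<not> b2 < q*(a*x + b*y) + w*(b*x - a*y)"
      unfolding R_def A2_def by (cases p) auto
    have c2': "b2 < q*x + w*y" using c2 J1 by simp
    have c3': "\<not> b2 < r*x + s*y" using c3 J2 by simp
    have "Dh * ((a-1)*x + b*y) = (r-q) * ((q*x + w*y) - (r*x + s*y))"
    proof -
      have "Dh * ((a-1)*x + b*y) = ((a-1)*Dh)*x + (b*Dh)*y" by (simp add: algebra_simps)
      also have "\<dots> = (r-q) * ((q*x + w*y) - (r*x + s*y))" unfolding I1 I2
        by (simp add: algebra_simps power2_eq_square)
      finally show ?thesis .
    qed
    moreover have "(r-q) * ((q*x + w*y) - (r*x + s*y)) > 0"
      using qr' c2' c3' by (intro mult_pos_pos) auto
    ultimately have "Dh * ((a-1)*x + b*y) > 0" by simp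
    hence "(a-1)*x + b*y > 0" using Dh0 by (simp add: zero_less_mult_iff)
    hence "\<not> b1 < x" using c1 by (simp add: algebra_simps)
    thus "p \<in> A3" unfolding A3_def p using c2' c3' spP by simp
  qed
  have d1: "A0 \<inter> (A1 \<union> A2) = {}" "A1 \<inter> A2 = {}" "A0 \<inter> (A1 \<union> A3) = {}" "A1 \<inter> A3 = {}"
    unfolding A0_def A1_def A2_def A3_def by auto
  have "measure P (A0 \<union> (A1 \<union> A2)) = measure P A0 + (measure P A1 + measure P A2)"
    using m d1 by (simp add: PP.finite_measure_Union)
  also have "\<dots> \<le> measure P A0 + (measure P A1 + measure P A3)"
    using mA2 PP.finite_measure_mono[OF sub m(4)] by simp
  also have "\<dots> = measure P (A0 \<union> (A1 \<union> A3))"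
    using m d1 by (simp add: PP.finite_measure_Union)
  finally show ?thesis unfolding e1 e2 .
qed

lemma link:
  fixes M :: "'a measure" and Z1 Z2 :: "'a \<Rightarrow> real" and r b1 b2 :: real
  assumes Z: "is_std_bivariate_normal M Z1 Z2 r"
  shows "measure M {\<omega> \<in> space M. Z1 \<omega> > b1 \<or> Z2 \<omega> > b2}
       = measure P {p. b1 < fst p \<or> b2 < r * fst p + sqrt (1 - r\<^sup>2) * snd p}"
proof -
  have Z1m[measurable]: "Z1 \<in> borel_measurable M" and Z2m[measurable]: "Z2 \<in> borel_measurable M"
    and dist: "distr M borel (\<lambda>\<omega>. (Z1 \<omega>, Z2 \<omega>)) = std_bivariate_normal r"
    using Z unfolding is_std_bivariate_normal_def by auto
  define U where "U = {p::real\<times>real. b1 < fst p \<or> b2 < snd p}"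
  have U: "U \<in> sets borel" unfolding U_def
    by (rule borel_open) (intro open_Collect_disj open_Collect_less continuous_intros)
  have Zm: "(\<lambda>\<omega>. (Z1 \<omega>, Z2 \<omega>)) \<in> measurable M borel" by measurable
  define T where "T = (\<lambda>(x::real,y::real). (x, r * x + sqrt (1 - r\<^sup>2) * y))"
  have Tm: "T \<in> measurable P borel" unfolding T_def by measurable
  have spP: "space P = UNIV" by (simp add: space_pair_measure)
  have "measure M {\<omega> \<in> space M. Z1 \<omega> > b1 \<or> Z2 \<omega> > b2} = measure M ((\<lambda>\<omega>. (Z1 \<omega>, Z2 \<omega>)) -` U \<inter> space M)"
    unfolding U_def by (rule arg_cong[where f="measure M"]) auto
  also have "\<dots> = measure (distr M borel (\<lambda>\<omega>. (Z1 \<omega>, Z2 \<omega>))) U" by (rule measure_distr[OF Zm U, symmetric])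
  also have "\<dots> = measure (distr P borel T) U" unfolding dist std_bivariate_normal_def T_def ..
  also have "\<dots> = measure P (T -` U \<inter> space P)" by (rule measure_distr[OF Tm U])
  also have "T -` U \<inter> space P = {p. b1 < fst p \<or> b2 < r * fst p + sqrt (1 - r\<^sup>2) * snd p}"
    unfolding T_def U_def spP by auto
  finally show ?thesis .
qed

theorem theorem2:
  fixes S11 S12 S22 b1 b2 :: real
    and M :: "'a measure" and Z1 Z2 :: "'a \<Rightarrow> real"
    and N :: "'b measure" and Zs1 Zs2 :: "'b \<Rightarrow> real"
  assumes psd: "\<forall>x y. S11 * x\<^sup>2 + 2 * S12 * x * y + S22 * y\<^sup>2 \<ge> 0"
    and pos11: "S11 > 0" and pos22: "S22 > 0"
    and Z: "is_std_bivariate_normal M Z1 Z2 (S12 / sqrt (S11 * S22))"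
    and Zs: "is_std_bivariate_normal N Zs1 Zs2 (sqrt (S22 / S11))"
    and h1: "b1 \<ge> b2" "b2 \<ge> 0"
    and h2: "S12 \<ge> S22"
  shows "measure M {\<omega> \<in> space M. Z1 \<omega> > b1 \<or> Z2 \<omega> > b2}
           \<le> measure N {\<omega> \<in> space N. Zs1 \<omega> > b1 \<or> Zs2 \<omega> > b2}"
proof -
  define r where "r = S12 / sqrt (S11 * S22)"
  define q where "q = sqrt (S22 / S11)"
  have sp: "sqrt (S11 * S22) > 0" using pos11 pos22 by simp
  have cs: "S12\<^sup>2 \<le> S11 * S22"
  proof -
    have "S11 * S12\<^sup>2 + 2 * S12 * S12 * (- S11) + S22 * (- S11)\<^sup>2 \<ge> 0" using psd by blast
    hence "S11 * (S11 * S22 - S12\<^sup>2) \<ge> 0" by (simp add: power2_eq_square algebra_simps)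
    hence "S11 * S22 - S12\<^sup>2 \<ge> 0" using pos11 by (simp add: zero_le_mult_iff)
    thus ?thesis by simp
  qed
  have "S12 \<le> sqrt (S11 * S22)"
  proof -
    have "S12 \<le> \<bar>S12\<bar>" by simp
    also have "\<dots> = sqrt (S12\<^sup>2)" by simp
    also have "\<dots> \<le> sqrt (S11 * S22)" using cs by (rule real_sqrt_le_mono)
    finally show ?thesis .
  qed
  hence r1: "r \<le> 1" unfolding r_def using sp by simp
  have q0: "q > 0" unfolding q_def using pos11 pos22 by simp
  have qeq: "q = S22 / sqrt (S11 * S22)"
  proof -
    have "q * sqrt (S11*S22) = sqrt (S22/S11 * (S11*S22))" unfolding q_def by (rule real_sqrt_mult[symmetric])
    also have "S22/S11 * (S11*S22) = S22\<^sup>2" using pos11 by (simp add: power2_eq_square field_simps)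
    also have "sqrt (S22\<^sup>2) = S22" using pos22 by simp
    finally have "q * sqrt (S11*S22) = S22" .
    thus ?thesis using sp pos11 pos22 by (simp add: eq_divide_eq)
  qed
  have qr: "q \<le> r" unfolding qeq r_def using sp h2 by (simp add: divide_right_mono)
  have "measure M {\<omega> \<in> space M. Z1 \<omega> > b1 \<or> Z2 \<omega> > b2}
       = measure P {p. b1 < fst p \<or> b2 < r * fst p + sqrt (1 - r\<^sup>2) * snd p}"
    unfolding r_def by (rule link[OF Z])
  also have "\<dots> \<le> measure P {p. b1 < fst p \<or> b2 < q * fst p + sqrt (1 - q\<^sup>2) * snd p}"
    by (rule core[OF q0 qr r1])
  also have "\<dots> = measure N {\<omega> \<in> space N. Zs1 \<omega> > b1 \<or> Zs2 \<omega> > b2}"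
    unfolding q_def by (rule link[OF Zs, symmetric])
  finally show ?thesis .
qed

end
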